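(* Let $\mathcal{L} \subseteq \mathcal{P}(\mathbb{N})$ be a class of languages. The following are equivalent: (i) every $L\in\mathcal L$ is finite; (ii) $\mathcal{L} \in [\tau(\mathbf{Caut}_{\mathbf{Tar}})\mathbf{Txt}\mathbf{Sd}\mathbf{Ex}]$; (iii) $\mathcal{L} \in [\tau(\mathbf{Caut}_{\mathbf{Tar}})\mathbf{Txt}\mathbf{G}\mathbf{Bc}]$.
   Context: Fix an acceptable numbering $(\varphi_e)$ of partial computable functions, $W_e=\mathrm{dom}(\varphi_e)$. A text is a total function $T:\mathbb N\to\mathbb N\cup\{\#\}$, $\mathrm{content}(T)=\mathrm{range}(T)\setminus\{\#\}$, $T[n]=(T(0),\dots,T(n-1))$; $\mathbf{Txt}$ is the set of all texts, $\mathbf{Txt}(L)$ those with content $L$. Learners are partial computable functions. $\mathbf G(h,T)(i)=h(T[i])$, $\mathbf{Sd}(h,T)(i)=h(\mathrm{content}(T[i]))$. For total $p:\mathbb N\to\mathbb N$ and text $T$: $\mathbf{Ex}(p,T)$ iff $\exists n_0\,\forall n\ge n_0: p(n)=p(n_0)\wedge W_{p(n_0)}=\mathrm{content}(T)$; $\mathbf{Bc}(p,T)$ iff $\exists n_0\,\forall n\ge n_0: W_{p(n)}=\mathrm{content}(T)$; $\mathbf{Caut}_{\mathbf{Tar}}(p,T)$ iff for all $n$ it is not the case that $\mathrm{content}(T)\subsetneq W_{p(n)}$. A learner $h$ $\tau(\alpha)\mathbf{Txt}\beta\delta$-learns $L$ iff for every text $T\in\mathbf{Txt}$, $\beta(h,T)$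 is total and $\alpha(\beta(h,T),T)$ holds, and for every $T\in\mathbf{Txt}(L)$, $\delta(\beta(h,T),T)$ holds. $[\tau(\alpha)\mathbf{Txt}\beta\delta]$ is the set of all classes $\mathcal L$ such that some learner $\tau(\alpha)\mathbf{Txt}\beta\delta$-learns every $L\in\mathcal L$. *)

theory Defs
  imports Main "HOL-Library.Nat_Bijection"
begin

datatype recf = Z | S | Id nat | Cn recf "recf list" | Pr recf recf | Mn recf

inductive eval :: "recf \<Rightarrow> nat list \<Rightarrow> nat \<Rightarrow> bool" where
  eval_Z:  "eval Z xs 0"
| eval_S:  "eval S (x # xs) (Suc x)"
| eval_Id: "i < length xs \<Longrightarrow> eval (Id i) xs (xs ! i)"
| eval_Cn: "list_all2 (\<lambda>g y. eval g xs y) gs ys \<Longrightarrow> eval f ys z \<Longrightarrow> eval (Cn f gs) xs z"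
| eval_Pr0: "eval f xs y \<Longrightarrow> eval (Pr f g) (0 # xs) y"
| eval_PrS: "eval (Pr f g) (x # xs) y \<Longrightarrow> eval g (x # y # xs) z \<Longrightarrow> eval (Pr f g) (Suc x # xs) z"
| eval_Mn: "eval f (y # xs) 0 \<Longrightarrow> (\<forall>z<y. \<exists>v. eval f (z # xs) (Suc v)) \<Longrightarrow> eval (Mn f) xs y"

definition computable1 :: "(nat \<Rightarrow> nat option) \<Rightarrow> bool" where
  "computable1 f \<longleftrightarrow> (\<exists>r. \<forall>x y. eval r [x] y \<longleftrightarrow> f x = Some y)"

definition computable2 :: "(nat \<Rightarrow> nat \<Rightarrow> nat option) \<Rightarrow> bool" where
  "computable2 f \<longleftrightarrow> (\<exists>r. \<forall>x z y. eval r [x, z] y \<longleftrightarrow> f x z = Some y)"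

definition acceptable :: "(nat \<Rightarrow> nat \<Rightarrow> nat option) \<Rightarrow> bool" where
  "acceptable \<phi> \<longleftrightarrow>
     computable2 \<phi> \<and>
     (\<forall>f. computable1 f \<longrightarrow> (\<exists>e. \<phi> e = f)) \<and>
     (\<forall>\<psi>. computable2 \<psi> \<longrightarrow>
        (\<exists>t. computable1 (\<lambda>x. Some (t x)) \<and> (\<forall>e. \<phi> (t e) = \<psi> e)))"

definition W :: "(nat \<Rightarrow> nat \<Rightarrow> nat option) \<Rightarrow> nat \<Rightarrow> nat set" where
  "W \<phi> e = {x. \<phi> e x \<noteq> None}"

text \<open>A text is a total function from nat to nat extended by the pause symbol;
  None represents the pause symbol #.\<close>

type_synonym ltext = "nat \<Rightarrow> nat option"

definition content :: "ltext \<Rightarrow> nat set" where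
  "content T = {x. \<exists>n. T n = Some x}"

definition initseg :: "ltext \<Rightarrow> nat \<Rightarrow> nat option list" where
  "initseg T n = map T [0..<n]"

definition content_list :: "nat option list \<Rightarrow> nat set" where
  "content_list xs = {x. Some x \<in> set xs}"

text \<open>Coding of finite sequences (# coded as 0, x as x+1) and of finite sets
  (canonical indices) as natural numbers, the inputs of learners.\<close>

definition seq_code :: "nat option list \<Rightarrow> nat" where
  "seq_code xs = list_encode (map (\<lambda>a. case a of None \<Rightarrow> 0 | Some x \<Rightarrow> Suc x) xs)"

definition set_code :: "nat set \<Rightarrow> nat" where
  "set_code A = set_encode A"

type_synonym learner = "nat \<Rightarrow> nat option"

definition G :: "learner \<Rightarrow> ltext \<Rightarrow> nat \<Rightarrow> nat option" where
  "G h T i = h (seq_code (initseg T i))"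

definition Sd :: "learner \<Rightarrow> ltext \<Rightarrow> nat \<Rightarrow> nat option" where
  "Sd h T i = h (set_code (content_list (initseg T i)))"

definition Ex :: "(nat \<Rightarrow> nat \<Rightarrow> nat option) \<Rightarrow> (nat \<Rightarrow> nat) \<Rightarrow> ltext \<Rightarrow> bool" where
  "Ex \<phi> p T \<longleftrightarrow> (\<exists>n0. \<forall>n\<ge>n0. p n = p n0 \<and> W \<phi> (p n0) = content T)"

definition Bc :: "(nat \<Rightarrow> nat \<Rightarrow> nat option) \<Rightarrow> (nat \<Rightarrow> nat) \<Rightarrow> ltext \<Rightarrow> bool" where
  "Bc \<phi> p T \<longleftrightarrow> (\<exists>n0. \<forall>n\<ge>n0. W \<phi> (p n) = content T)"

definition CautTar :: "(nat \<Rightarrow> nat \<Rightarrow> nat option) \<Rightarrow> (nat \<Rightarrow> nat) \<Rightarrow> ltext \<Rightarrow> bool" where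
  "CautTar \<phi> p T \<longleftrightarrow> (\<forall>n. \<not> (content T \<subset> W \<phi> (p n)))"

definition tau_learns ::
  "(nat \<Rightarrow> nat \<Rightarrow> nat option)
   \<Rightarrow> ((nat \<Rightarrow> nat \<Rightarrow> nat option) \<Rightarrow> (nat \<Rightarrow> nat) \<Rightarrow> ltext \<Rightarrow> bool)
   \<Rightarrow> (learner \<Rightarrow> ltext \<Rightarrow> nat \<Rightarrow> nat option)
   \<Rightarrow> ((nat \<Rightarrow> nat \<Rightarrow> nat option) \<Rightarrow> (nat \<Rightarrow> nat) \<Rightarrow> ltext \<Rightarrow> bool)
   \<Rightarrow> learner \<Rightarrow> nat set \<Rightarrow> bool" where
  "tau_learns \<phi> \<alpha> \<beta> \<delta> h L \<longleftrightarrow>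
     (\<forall>T. (\<forall>i. \<beta> h T i \<noteq> None) \<and> \<alpha> \<phi> (\<lambda>i. the (\<beta> h T i)) T) \<and>
     (\<forall>T. content T = L \<longrightarrow> \<delta> \<phi> (\<lambda>i. the (\<beta> h T i)) T)"

definition tau_class ::
  "(nat \<Rightarrow> nat \<Rightarrow> nat option)
   \<Rightarrow> ((nat \<Rightarrow> nat \<Rightarrow> nat option) \<Rightarrow> (nat \<Rightarrow> nat) \<Rightarrow> ltext \<Rightarrow> bool)
   \<Rightarrow> (learner \<Rightarrow> ltext \<Rightarrow> nat \<Rightarrow> nat option)
   \<Rightarrow> ((nat \<Rightarrow> nat \<Rightarrow> nat option) \<Rightarrow> (nat \<Rightarrow> nat) \<Rightarrow> ltext \<Rightarrow> bool)
   \<Rightarrow> nat set set \<Rightarrow> bool" where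
  "tau_class \<phi> \<alpha> \<beta> \<delta> \<L> \<longleftrightarrow>
     (\<exists>h. computable1 h \<and> (\<forall>L\<in>\<L>. tau_learns \<phi> \<alpha> \<beta> \<delta> h L))"

end

theory Submission
  imports Defs
begin


inductive_cases evalZE: "eval Z xs y"
inductive_cases evalSE: "eval S xs y"
inductive_cases evalIdE: "eval (Id i) xs y"
inductive_cases evalCnE: "eval (Cn f gs) xs y"
inductive_cases evalPrE: "eval (Pr f g) xs y"
inductive_cases evalMnE: "eval (Mn f) xs y"

lemma list_all2_det:
  "list_all2 P gs ys \<Longrightarrow> list_all2 Q gs ys' \<Longrightarrow> (\<And>g y y'. P g y \<Longrightarrow> Q g y' \<Longrightarrow> y = y') \<Longrightarrow> ys = ys'"
proof (induction gs arbitrary: ys ys')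
  case Nil then show ?case by simp
next
  case (Cons a gs)
  then show ?case by (auto simp: list_all2_Cons1)
qed

lemma eval_det: "eval f xs y \<Longrightarrow> eval f xs y' \<Longrightarrow> y = y'"
proof (induction arbitrary: y' rule: eval.induct)
  case (eval_Z xs) from eval_Z.prems show ?case by (rule evalZE) simp
next
  case (eval_S x xs) from eval_S.prems show ?case by (rule evalSE) simp
next
  case (eval_Id i xs) from eval_Id.prems show ?case by (rule evalIdE) simp
next
  case (eval_Cn xs gs ys f z)
  from eval_Cn.prems obtain ys' where a: "list_all2 (\<lambda>g y. eval g xs y) gs ys'" and b: "eval f ys' y'"
    by (rule evalCnE) auto
  have "ys = ys'"
    by (rule list_all2_det[OF eval_Cn.IH(1) a]) blast
  with b eval_Cn.IH(2) show ?case by blast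
next
  case (eval_Pr0 f xs y g)
  from eval_Pr0.prems show ?case
    by (rule evalPrE) (use eval_Pr0.IH in auto)
next
  case (eval_PrS f g x xs y z)
  from eval_PrS.prems obtain y2 where "eval (Pr f g) (x # xs) y2" "eval g (x # y2 # xs) y'"
    by (rule evalPrE) auto
  then show ?case using eval_PrS.IH by blast
next
  case (eval_Mn f y xs)
  from eval_Mn.prems have a: "eval f (y' # xs) 0" and b: "\<forall>z<y'. \<exists>v. eval f (z # xs) (Suc v)"
    by (rule evalMnE, simp)+
  show ?case
  proof (rule linorder_cases[of y y'])
    assume "y < y'" then obtain v where "eval f (y # xs) (Suc v)" using b by blast
    with eval_Mn.IH(1) show ?thesis by fastforce
  next
    assume "y' < y" then obtain v where "eval f (y' # xs) (Suc v)" "\<forall>w. eval f (y' # xs) w \<longrightarrow> Suc v = w"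
      using eval_Mn.IH(2) by blast
    with a show ?thesis by fastforce
  qed
qed

definition computes :: "recf \<Rightarrow> nat \<Rightarrow> (nat list \<Rightarrow> nat) \<Rightarrow> bool" where
  "computes P n F \<longleftrightarrow> (\<forall>xs. length xs = n \<longrightarrow> eval P xs (F xs))"

lemma computes_eval: "computes P n F \<Longrightarrow> length xs = n \<Longrightarrow> eval P xs y \<longleftrightarrow> y = F xs"
  unfolding computes_def using eval_det by blast

lemma computes_cong: "computes P n F \<Longrightarrow> (\<And>xs. length xs = n \<Longrightarrow> F xs = F' xs) \<Longrightarrow> computes P n F'"
  unfolding computes_def by simp

lemma computes_Z: "computes Z n (\<lambda>_. 0)"
  unfolding computes_def by (auto intro: eval_Z)

lemma computes_S: "computes S (Suc 0) (\<lambda>xs. Suc (xs ! 0))"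
  unfolding computes_def by (auto simp: length_Suc_conv intro: eval_S)

lemma computes_Id: "i < n \<Longrightarrow> computes (Id i) n (\<lambda>xs. xs ! i)"
  unfolding computes_def by (auto intro: eval_Id)

lemma computes_Cn:
  assumes "computes f (length Qs) F" "list_all2 (\<lambda>g Q. computes g n Q) gs Qs"
  shows "computes (Cn f gs) n (\<lambda>xs. F (map (\<lambda>Q. Q xs) Qs))"
  unfolding computes_def
proof (intro allI impI)
  fix xs :: "nat list" assume l: "length xs = n"
  have "list_all2 (\<lambda>g y. eval g xs y) gs (map (\<lambda>Q. Q xs) Qs)"
    using assms(2) l by (auto simp: list_all2_conv_all_nth computes_def)
  moreover have "eval f (map (\<lambda>Q. Q xs) Qs) (F (map (\<lambda>Q. Q xs) Qs))"
    using assms(1) by (simp add: computes_def)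
  ultimately show "eval (Cn f gs) xs (F (map (\<lambda>Q. Q xs) Qs))" by (rule eval_Cn)
qed

lemma computes_Cn1: assumes "computes f (Suc 0) F" "computes g n Q"
  shows "computes (Cn f [g]) n (\<lambda>xs. F [Q xs])"
proof -
  have "computes (Cn f [g]) n (\<lambda>xs. F (map (\<lambda>Q. Q xs) [Q]))"
    by (rule computes_Cn) (use assms in auto)
  then show ?thesis by simp
qed

lemma computes_Cn2: assumes "computes f (Suc (Suc 0)) F" "computes g1 n Q1" "computes g2 n Q2"
  shows "computes (Cn f [g1, g2]) n (\<lambda>xs. F [Q1 xs, Q2 xs])"
proof -
  have "computes (Cn f [g1, g2]) n (\<lambda>xs. F (map (\<lambda>Q. Q xs) [Q1, Q2]))"
    by (rule computes_Cn) (use assms in \<open>auto simp: numeral_2_eq_2\<close>)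
  then show ?thesis by simp
qed

lemma computes_Pr:
  assumes "computes f n F" "computes g (Suc (Suc n)) H"
  shows "computes (Pr f g) (Suc n) (\<lambda>xs. rec_nat (F (tl xs)) (\<lambda>x r. H (x # r # tl xs)) (hd xs))"
  unfolding computes_def
proof (intro allI impI)
  fix xs :: "nat list" assume "length xs = Suc n"
  then obtain x ys where xs: "xs = x # ys" "length ys = n" by (auto simp: length_Suc_conv)
  have "eval (Pr f g) (x # ys) (rec_nat (F ys) (\<lambda>x r. H (x # r # ys)) x)"
  proof (induction x)
    case 0 then show ?case using assms(1) xs(2) by (auto simp: computes_def intro: eval_Pr0)
  next
    case (Suc x) then show ?case using assms(2) xs(2) by (auto simp: computes_def intro: eval_PrS)
  qed
  then show "eval (Pr f g) xs (rec_nat (F (tl xs)) (\<lambda>x r. H (x # r # tl xs)) (hd xs))"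
    using xs by simp
qed

lemma eval_Mn_iff:
  assumes "computes g (Suc n) H" "length xs = n"
  shows "eval (Mn g) xs y \<longleftrightarrow> H (y # xs) = 0 \<and> (\<forall>z<y. H (z # xs) \<noteq> 0)"
proof
  assume "eval (Mn g) xs y"
  then have a: "eval g (y # xs) 0" and b: "\<forall>z<y. \<exists>v. eval g (z # xs) (Suc v)" by (rule evalMnE, simp)+
  have e: "\<And>z w. eval g (z # xs) w \<longleftrightarrow> w = H (z # xs)" using computes_eval[OF assms(1)] assms(2) by simp
  show "H (y # xs) = 0 \<and> (\<forall>z<y. H (z # xs) \<noteq> 0)" using a b e by fastforce
next
  assume h: "H (y # xs) = 0 \<and> (\<forall>z<y. H (z # xs) \<noteq> 0)"
  have e: "\<And>z w. eval g (z # xs) w \<longleftrightarrow> w = H (z # xs)" using computes_eval[OF assms(1)] assms(2) by simp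
  show "eval (Mn g) xs y"
  proof (rule eval_Mn)
    show "eval g (y # xs) 0" using e h by simp
    show "\<forall>z<y. \<exists>v. eval g (z # xs) (Suc v)"
    proof (intro allI impI)
      fix z assume "z < y"
      then have "H (z # xs) = Suc (H (z # xs) - 1)" using h by simp
      then show "\<exists>v. eval g (z # xs) (Suc v)" using e by metis
    qed
  qed
qed

lemma computes_Mn:
  assumes "computes g (Suc n) H" "\<And>xs. length xs = n \<Longrightarrow> \<exists>y. H (y # xs) = 0"
  shows "computes (Mn g) n (\<lambda>xs. LEAST y. H (y # xs) = 0)"
  unfolding computes_def
proof (intro allI impI)
  fix xs :: "nat list" assume l: "length xs = n"
  then obtain y where "H (y # xs) = 0" using assms(2) by blast
  then have "H ((LEAST y. H (y # xs) = 0) # xs) = 0" by (rule LeastI)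
  moreover have "\<forall>z<(LEAST y. H (y # xs) = 0). H (z # xs) \<noteq> 0" using not_less_Least by blast
  ultimately show "eval (Mn g) xs (LEAST y. H (y # xs) = 0)" using eval_Mn_iff[OF assms(1) l] by blast
qed

lemma eval_CnZ_Mn:
  assumes "computes g (Suc n) H" "length xs = n"
  shows "eval (Cn Z [Mn g]) xs y \<longleftrightarrow> y = 0 \<and> (\<exists>z. H (z # xs) = 0)"
proof
  assume "eval (Cn Z [Mn g]) xs y"
  then obtain ys where "list_all2 (\<lambda>g y. eval g xs y) [Mn g] ys" "eval Z ys y" by (rule evalCnE) auto
  then obtain y' where "eval (Mn g) xs y'" "y = 0" by (auto simp: list_all2_Cons1 elim: evalZE)
  then show "y = 0 \<and> (\<exists>z. H (z # xs) = 0)" using eval_Mn_iff[OF assms] by blast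
next
  assume h: "y = 0 \<and> (\<exists>z. H (z # xs) = 0)"
  then obtain z where "H (z # xs) = 0" by blast
  then have "H ((LEAST y. H (y # xs) = 0) # xs) = 0" by (rule LeastI)
  moreover have "\<forall>z<(LEAST y. H (y # xs) = 0). H (z # xs) \<noteq> 0" using not_less_Least by blast
  ultimately have "eval (Mn g) xs (LEAST y. H (y # xs) = 0)" using eval_Mn_iff[OF assms] by blast
  then show "eval (Cn Z [Mn g]) xs y" using h by (auto intro!: eval_Cn eval_Z)
qed



lemma len1E: "length xs = Suc 0 \<Longrightarrow> (\<And>a. P [a]) \<Longrightarrow> P xs"
  by (auto simp: length_Suc_conv)
lemma len2E: "length xs = Suc (Suc 0) \<Longrightarrow> (\<And>a b. P [a, b]) \<Longrightarrow> P xs"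
  by (auto simp: length_Suc_conv)
lemma len3E: "length xs = Suc (Suc (Suc 0)) \<Longrightarrow> (\<And>a b c. P [a, b, c]) \<Longrightarrow> P xs"
  by (auto simp: length_Suc_conv)

definition "ADD = Pr (Id 0) (Cn S [Id 1])"
lemma computes_ADD: "computes ADD (Suc (Suc 0)) (\<lambda>xs. xs ! 0 + xs ! 1)"
  unfolding ADD_def
  apply (rule computes_cong[OF computes_Pr[OF computes_Id computes_Cn1[OF computes_S computes_Id]]])
    apply simp
   apply simp
  subgoal for xs
    apply (erule len2E)
    subgoal for a b by (induction a) auto
    done
  done

definition "MUL = Pr Z (Cn ADD [Id 1, Id 2])"
lemma computes_MUL: "computes MUL (Suc (Suc 0)) (\<lambda>xs. xs ! 0 * xs ! 1)"
  unfolding MUL_def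
  apply (rule computes_cong[OF computes_Pr[OF computes_Z computes_Cn2[OF computes_ADD computes_Id computes_Id]]])
    apply simp
   apply simp
  subgoal for xs
    apply (erule len2E)
    subgoal for a b by (induction a) auto
    done
  done

definition "PRED = Pr Z (Id 0)"
lemma computes_PRED: "computes PRED (Suc 0) (\<lambda>xs. xs ! 0 - 1)"
  unfolding PRED_def
  apply (rule computes_cong[OF computes_Pr[OF computes_Z computes_Id]])
   apply simp
  subgoal for xs
    apply (erule len1E)
    subgoal for a by (cases a) auto
    done
  done

definition "SUBR = Pr (Id 0) (Cn PRED [Id 1])"
lemma computes_SUBR: "computes SUBR (Suc (Suc 0)) (\<lambda>xs. xs ! 1 - xs ! 0)"
  unfolding SUBR_def
  apply (rule computes_cong[OF computes_Pr[OF computes_Id computes_Cn1[OF computes_PRED computes_Id]]])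
    apply simp
   apply simp
  subgoal for xs
    apply (erule len2E)
    subgoal for a b by (induction a) auto
    done
  done

definition "SUB = Cn SUBR [Id 1, Id 0]"
lemma computes_SUB: "computes SUB (Suc (Suc 0)) (\<lambda>xs. xs ! 0 - xs ! 1)"
  unfolding SUB_def
  apply (rule computes_cong[OF computes_Cn2[OF computes_SUBR computes_Id computes_Id]])
    apply simp
   apply simp
  apply simp
  done

definition "TRI = Pr Z (Cn ADD [Id 1, Cn S [Id 0]])"
lemma computes_TRI: "computes TRI (Suc 0) (\<lambda>xs. triangle (xs ! 0))"
  unfolding TRI_def
  apply (rule computes_cong[OF computes_Pr[OF computes_Z computes_Cn2[OF computes_ADD computes_Id computes_Cn1[OF computes_S computes_Id]]]])
    apply simp
   apply simp
  subgoal for xs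
    apply (erule len1E)
    subgoal for a by (induction a) auto
    done
  done

definition "POW2 = Pr (Cn S [Z]) (Cn ADD [Id 1, Id 1])"
lemma computes_POW2: "computes POW2 (Suc 0) (\<lambda>xs. 2 ^ (xs ! 0))"
  unfolding POW2_def
  apply (rule computes_cong[OF computes_Pr[OF computes_Cn1[OF computes_S computes_Z] computes_Cn2[OF computes_ADD computes_Id computes_Id]]])
    apply simp
   apply simp
  subgoal for xs
    apply (erule len1E)
    subgoal for a by (induction a) auto
    done
  done

definition "GSD = (let P = Cn POW2 [Id 2]; A = Cn MUL [Cn S [Cn ADD [Id 0, Id 0]], P] in
   Cn ADD [Cn SUB [A, Id 1], Cn SUB [Cn S [Id 1], Cn ADD [A, P]]])"

lemma computes_GSD: "computes GSD (Suc (Suc (Suc 0)))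
  (\<lambda>xs. ((2 * xs ! 0 + 1) * 2 ^ (xs ! 2) - xs ! 1) + (Suc (xs ! 1) - ((2 * xs ! 0 + 1) * 2 ^ (xs ! 2) + 2 ^ (xs ! 2))))"
  unfolding GSD_def Let_def
  apply (rule computes_cong[OF computes_Cn2[OF computes_ADD
     computes_Cn2[OF computes_SUB computes_Cn2[OF computes_MUL computes_Cn1[OF computes_S computes_Cn2[OF computes_ADD computes_Id computes_Id]]
        computes_Cn1[OF computes_POW2 computes_Id]] computes_Id]
     computes_Cn2[OF computes_SUB computes_Cn1[OF computes_S computes_Id]
        computes_Cn2[OF computes_ADD computes_Cn2[OF computes_MUL computes_Cn1[OF computes_S computes_Cn2[OF computes_ADD computes_Id computes_Id]]
        computes_Cn1[OF computes_POW2 computes_Id]] computes_Cn1[OF computes_POW2 computes_Id]]]]])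
  apply (simp_all add: numeral_2_eq_2)
  done

definition "PDS = Mn (Cn SUB [Cn S [Id 1], Cn TRI [Cn S [Id 0]]])"
definition sdec :: "nat \<Rightarrow> nat" where "sdec n = (LEAST m. Suc n - triangle (Suc m) = 0)"

lemma computes_PDS: "computes PDS (Suc 0) (\<lambda>xs. sdec (xs ! 0))"
  unfolding PDS_def
  apply (rule computes_cong[OF computes_Mn[OF computes_Cn2[OF computes_SUB computes_Cn1[OF computes_S computes_Id]
     computes_Cn1[OF computes_TRI computes_Cn1[OF computes_S computes_Id]]]]])
     apply simp
    apply simp
  subgoal for xs
    apply (erule len1E)
    subgoal for a by (rule exI[of _ a]) simp
    done
  subgoal for xs
    apply (erule len1E)
    subgoal for a by (simp add: sdec_def)
    done
  done

definition headf :: "nat \<Rightarrow> nat" where "headf d = (d - 1) - triangle (sdec (d - 1))"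
definition tailf :: "nat \<Rightarrow> nat" where "tailf d = sdec (d - 1) - headf d"

definition "NM1 = Cn PRED [Id 0]"
definition "HEAD = Cn SUB [NM1, Cn TRI [Cn PDS [NM1]]]"
definition "TAIL = Cn SUB [Cn PDS [NM1], HEAD]"

lemma computes_NM1: "computes NM1 (Suc 0) (\<lambda>xs. xs ! 0 - 1)"
  unfolding NM1_def
  by (rule computes_cong[OF computes_Cn1[OF computes_PRED computes_Id]]) simp_all

lemma computes_HEAD: "computes HEAD (Suc 0) (\<lambda>xs. headf (xs ! 0))"
  unfolding HEAD_def
  by (rule computes_cong[OF computes_Cn2[OF computes_SUB computes_NM1 computes_Cn1[OF computes_TRI computes_Cn1[OF computes_PDS computes_NM1]]]])
    (simp add: headf_def)

lemma computes_TAIL: "computes TAIL (Suc 0) (\<lambda>xs. tailf (xs ! 0))"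
  unfolding TAIL_def
  by (rule computes_cong[OF computes_Cn2[OF computes_SUB computes_Cn1[OF computes_PDS computes_NM1] computes_HEAD]])
    (simp add: tailf_def)

definition "ITER = Pr (Id 0) (Cn TAIL [Id 1])"
lemma computes_ITER: "computes ITER (Suc (Suc 0)) (\<lambda>xs. (tailf ^^ (xs ! 0)) (xs ! 1))"
  unfolding ITER_def
  apply (rule computes_cong[OF computes_Pr[OF computes_Id computes_Cn1[OF computes_TAIL computes_Id]]])
    apply simp
   apply simp
  subgoal for xs
    apply (erule len2E)
    subgoal for a b by (induction a) auto
    done
  done

definition "GGX = (let D = Cn ITER [Id 0, Id 1]; H = Cn HEAD [D]; X1 = Cn S [Id 2] in
  Cn ADD [Cn SUB [Cn S [Z], D], Cn ADD [Cn SUB [H, X1], Cn SUB [X1, H]]])"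

lemma computes_GGX: "computes GGX (Suc (Suc (Suc 0)))
  (\<lambda>xs. (1 - (tailf ^^ (xs ! 0)) (xs ! 1)) + ((headf ((tailf ^^ (xs ! 0)) (xs ! 1)) - Suc (xs ! 2))
     + (Suc (xs ! 2) - headf ((tailf ^^ (xs ! 0)) (xs ! 1)))))"
  unfolding GGX_def Let_def
  apply (rule computes_cong[OF computes_Cn2[OF computes_ADD
     computes_Cn2[OF computes_SUB computes_Cn1[OF computes_S computes_Z] computes_Cn2[OF computes_ITER computes_Id computes_Id]]
     computes_Cn2[OF computes_ADD
       computes_Cn2[OF computes_SUB computes_Cn1[OF computes_HEAD computes_Cn2[OF computes_ITER computes_Id computes_Id]] computes_Cn1[OF computes_S computes_Id]]
       computes_Cn2[OF computes_SUB computes_Cn1[OF computes_S computes_Id] computes_Cn1[OF computes_HEAD computes_Cn2[OF computes_ITER computes_Id computes_Id]]]]]])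
  apply (simp_all add: numeral_2_eq_2)
  done



lemma triangle_mono: "i \<le> j \<Longrightarrow> triangle i \<le> triangle j"
  by (induction j) (auto simp: le_Suc_eq)

lemma sdec_lemma: "prod_decode n = (n - triangle (sdec n), sdec n - (n - triangle (sdec n)))"
proof -
  obtain a b where pd: "prod_decode n = (a, b)" by (cases "prod_decode n")
  have n: "n = triangle (a + b) + a"
    using prod_decode_inverse[of n] by (simp add: pd prod_encode_def)
  have s: "sdec n = a + b"
    unfolding sdec_def
  proof (rule Least_equality)
    show "Suc n - triangle (Suc (a + b)) = 0" using n by simp
  next
    fix m assume m: "Suc n - triangle (Suc m) = 0"
    show "a + b \<le> m"
    proof (rule ccontr)
      assume "\<not> a + b \<le> m"
      then have "triangle (Suc m) \<le> triangle (a + b)" by (intro triangle_mono) simp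
      with m n show False by simp
    qed
  qed
  show ?thesis using pd n s by simp
qed

lemma headf_alt: "headf d = fst (prod_decode (d - 1))"
  unfolding headf_def by (subst sdec_lemma) simp
lemma tailf_alt: "tailf d = snd (prod_decode (d - 1))"
proof -
  have h: "prod_decode (d - 1) = (d - 1 - triangle (sdec (d - 1)), sdec (d - 1) - (d - 1 - triangle (sdec (d - 1))))"
    by (rule sdec_lemma)
  show ?thesis unfolding tailf_def headf_alt by (simp only: h fst_conv snd_conv)
qed

lemma prod_decode_0: "prod_decode 0 = (0, 0)"
  using prod_encode_inverse[of "(0, 0)"] by (simp add: prod_encode_def)

lemma tailf_enc: "tailf (list_encode m) = list_encode (tl m)"
  by (cases m) (auto simp: tailf_alt prod_decode_0)

lemma headf_enc: "headf (list_encode (y # ys)) = y"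
  by (simp add: headf_alt)

lemma iter_enc: "(tailf ^^ k) (list_encode l) = list_encode (drop k l)"
  by (induction k) (auto simp: tailf_enc drop_Suc tl_drop)

lemma list_enc_0: "list_encode m = 0 \<longleftrightarrow> m = []"
  by (cases m) auto

lemma list_cond: "Suc x \<in> set (list_decode c) \<longleftrightarrow>
   (\<exists>k. (tailf ^^ k) c \<noteq> 0 \<and> headf ((tailf ^^ k) c) = Suc x)"
proof -
  define l where "l = list_decode c"
  have c: "c = list_encode l" by (simp add: l_def)
  have "Suc x \<in> set l \<longleftrightarrow> (\<exists>k. drop k l \<noteq> [] \<and> hd (drop k l) = Suc x)"
  proof
    assume "Suc x \<in> set l"
    then obtain i where "i < length l" "l ! i = Suc x" by (auto simp: in_set_conv_nth)
    then show "\<exists>k. drop k l \<noteq> [] \<and> hd (drop k l) = Suc x"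
      by (intro exI[of _ i]) (simp add: hd_drop_conv_nth)
  next
    assume "\<exists>k. drop k l \<noteq> [] \<and> hd (drop k l) = Suc x"
    then obtain k where "drop k l \<noteq> []" "hd (drop k l) = Suc x" by blast
    then have "Suc x \<in> set (drop k l)" by (metis list.set_sel(1))
    then show "Suc x \<in> set l" by (meson in_set_dropD)
  qed
  moreover have "\<And>k. (tailf ^^ k) c \<noteq> 0 \<and> headf ((tailf ^^ k) c) = Suc x \<longleftrightarrow>
      drop k l \<noteq> [] \<and> hd (drop k l) = Suc x"
  proof -
    fix k
    show "(tailf ^^ k) c \<noteq> 0 \<and> headf ((tailf ^^ k) c) = Suc x \<longleftrightarrow>
      drop k l \<noteq> [] \<and> hd (drop k l) = Suc x"
      unfolding c iter_enc by (cases "drop k l") (auto simp: headf_alt)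
  qed
  ultimately show ?thesis by (simp add: l_def)
qed

lemma set_cond: "x \<in> set_decode c \<longleftrightarrow>
   (\<exists>q. ((2 * q + 1) * 2 ^ x - c) + (Suc c - ((2 * q + 1) * 2 ^ x + 2 ^ x)) = (0::nat))"
proof
  assume "x \<in> set_decode c"
  then have o: "odd (c div 2 ^ x)" by (simp add: set_decode_def)
  define q where "q = c div 2 ^ x div 2"
  have e: "c div 2 ^ x = 2 * q + 1" using o unfolding q_def by (simp add: odd_two_times_div_two_succ)
  have p: "(0::nat) < 2 ^ x" by simp
  have "(c div 2 ^ x) * 2 ^ x \<le> c" by (metis div_mult_mod_eq le_add1)
  moreover have "c < (c div 2 ^ x) * 2 ^ x + 2 ^ x"
    using p by (metis div_mult_mod_eq mod_less_divisor nat_add_left_cancel_less)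
  ultimately show "\<exists>q. ((2 * q + 1) * 2 ^ x - c) + (Suc c - ((2 * q + 1) * 2 ^ x + 2 ^ x)) = (0::nat)"
    using e by (intro exI[of _ q]) simp
next
  assume "\<exists>q. ((2 * q + 1) * 2 ^ x - c) + (Suc c - ((2 * q + 1) * 2 ^ x + 2 ^ x)) = (0::nat)"
  then obtain q where a: "(2 * q + 1) * 2 ^ x \<le> c" and b: "c < (2 * q + 1) * 2 ^ x + 2 ^ x" by auto
  have "c div 2 ^ x = 2 * q + 1"
  proof (rule div_nat_eqI)
    show "2 ^ x * (2 * q + 1) \<le> c" using a by (simp add: mult.commute)
    show "c < 2 ^ x * Suc (2 * q + 1)" using b by (simp add: algebra_simps)
  qed
  then show "x \<in> set_decode c" by (simp add: set_decode_def)
qed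



definition psiSD :: "nat \<Rightarrow> nat \<Rightarrow> nat option" where
  "psiSD c x = (if x \<in> set_decode c then Some 0 else None)"
definition psiG :: "nat \<Rightarrow> nat \<Rightarrow> nat option" where
  "psiG c x = (if Suc x \<in> set (list_decode c) then Some 0 else None)"

lemma computable_psiSD: "computable2 psiSD"
  unfolding computable2_def
proof (intro exI allI)
  fix c x y
  show "eval (Cn Z [Mn GSD]) [c, x] y \<longleftrightarrow> psiSD c x = Some y"
    by (subst eval_CnZ_Mn[OF computes_GSD]) (auto simp: psiSD_def set_cond)
qed

definition ggf :: "nat list \<Rightarrow> nat" where
  "ggf xs = (1 - (tailf ^^ (xs ! 0)) (xs ! 1)) + ((headf ((tailf ^^ (xs ! 0)) (xs ! 1)) - Suc (xs ! 2))
     + (Suc (xs ! 2) - headf ((tailf ^^ (xs ! 0)) (xs ! 1))))"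

lemma computes_GGX': "computes GGX (Suc (Suc (Suc 0))) ggf"
  unfolding ggf_def by (rule computes_GGX)

lemma ggf_zero: "ggf [k, c, x] = 0 \<longleftrightarrow> (tailf ^^ k) c \<noteq> 0 \<and> headf ((tailf ^^ k) c) = Suc x"
  unfolding ggf_def by simp arith

lemma computable_psiG: "computable2 psiG"
  unfolding computable2_def
proof (intro exI allI)
  fix c x y
  show "eval (Cn Z [Mn GGX]) [c, x] y \<longleftrightarrow> psiG c x = Some y"
    by (subst eval_CnZ_Mn[OF computes_GGX']) (auto simp only: ggf_zero psiG_def list_cond length_Cons list.size split: if_splits)
qed

abbreviation CL :: "ltext \<Rightarrow> nat \<Rightarrow> nat set" where
  "CL T i \<equiv> content_list (initseg T i)"

lemma CL_eq: "CL T i = {x. \<exists>j<i. T j = Some x}"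
  by (auto simp: content_list_def initseg_def image_iff) (metis atLeast0LessThan lessThan_iff)

lemma CL_sub: "CL T i \<subseteq> content T"
  by (auto simp: CL_eq content_def)

lemma CL_mono: "i \<le> j \<Longrightarrow> CL T i \<subseteq> CL T j"
  unfolding CL_eq by (blast intro: order_less_le_trans)

lemma CL_finite: "finite (CL T i)"
proof -
  have "CL T i \<subseteq> (\<lambda>j. the (T j)) ` {..<i}" by (force simp: CL_eq)
  then show ?thesis by (rule finite_subset) simp
qed

lemma CL_conv: assumes "finite (content T)"
  shows "\<exists>n0. \<forall>n\<ge>n0. CL T n = content T"
proof -
  define J where "J = (\<lambda>x. SOME j. T j = Some x) ` content T"
  have "finite J" using assms by (simp add: J_def)
  define n0 where "n0 = Suc (Max (insert 0 J))"
  have n0: "J \<subseteq> {..<n0}"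
  proof
    fix j assume "j \<in> J"
    then have "j \<le> Max (insert 0 J)" using \<open>finite J\<close> by simp
    then show "j \<in> {..<n0}" by (simp add: n0_def)
  qed
  have "content T \<subseteq> CL T n0"
  proof
    fix x assume "x \<in> content T"
    then have "T (SOME j. T j = Some x) = Some x" unfolding content_def by (auto intro: someI)
    moreover have "(SOME j. T j = Some x) < n0" using n0 \<open>x \<in> content T\<close> by (auto simp: J_def)
    ultimately show "x \<in> CL T n0" by (auto simp: CL_eq)
  qed
  then show ?thesis using CL_mono CL_sub by (meson subset_antisym subset_trans)
qed

lemma W_psiSD: "(\<forall>e. \<phi> (t e) = psiSD e) \<Longrightarrow> W \<phi> (t c) = set_decode c"
  by (auto simp: W_def psiSD_def)

lemma W_psiG: "(\<forall>e. \<phi> (t e) = psiG e) \<Longrightarrow> W \<phi> (t c) = {x. Suc x \<in> set (list_decode c)}"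
  by (auto simp: W_def psiG_def)

lemma seq_code_content: "{x. Suc x \<in> set (list_decode (seq_code xs))} = content_list xs"
proof -
  have "Suc x \<in> set (map (\<lambda>a. case a of None \<Rightarrow> 0 | Some x \<Rightarrow> Suc x) xs) \<longleftrightarrow> Some x \<in> set xs" for x
  proof
    assume "Suc x \<in> set (map (\<lambda>a. case a of None \<Rightarrow> 0 | Some x \<Rightarrow> Suc x) xs)"
    then obtain a where "a \<in> set xs" "Suc x = (case a of None \<Rightarrow> 0 | Some x \<Rightarrow> Suc x)" by auto
    then show "Some x \<in> set xs" by (auto split: option.splits)
  next
    assume "Some x \<in> set xs"
    then show "Suc x \<in> set (map (\<lambda>a. case a of None \<Rightarrow> 0 | Some x \<Rightarrow> Suc x) xs)"
      by (metis (mono_tags, lifting) image_eqI list.set_map option.simps(5))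
  qed
  then show ?thesis by (simp add: seq_code_def content_list_def)
qed

lemma infinite_not_learn:
  fixes \<beta> :: "learner \<Rightarrow> ltext \<Rightarrow> nat \<Rightarrow> nat option" and h :: learner
    and \<phi> :: "nat \<Rightarrow> nat \<Rightarrow> nat option" and \<delta> and L :: "nat set"
  assumes dep: "\<And>T T' n. initseg T n = initseg T' n \<Longrightarrow> \<beta> h T n = \<beta> h T' n"
  and learn: "tau_learns \<phi> CautTar \<beta> \<delta> h L"
  and del: "\<And>p T. \<delta> \<phi> p T \<Longrightarrow> \<exists>n. W \<phi> (p n) = content T"
  shows "finite L"
proof (rule ccontr)
  assume inf: "infinite L"
  define T :: ltext where "T = (\<lambda>n. if n \<in> L then Some n else None)"
  have cT: "content T = L" by (auto simp: T_def content_def split: if_splits)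
  then obtain n0 where n0: "W \<phi> (the (\<beta> h T n0)) = L"
    using learn del unfolding tau_learns_def by metis
  define T' :: ltext where "T' = (\<lambda>i. if i < n0 then T i else None)"
  have "initseg T' n0 = initseg T n0" by (simp add: initseg_def T'_def)
  then have b: "\<beta> h T' n0 = \<beta> h T n0" by (rule dep)
  have "CautTar \<phi> (\<lambda>i. the (\<beta> h T' i)) T'" using learn unfolding tau_learns_def by blast
  then have nc: "\<not> content T' \<subset> L" using n0 b unfolding CautTar_def by metis
  have sub: "content T' \<subseteq> L" by (auto simp: T'_def T_def content_def split: if_splits)
  have "content T' \<subseteq> {..<n0}" by (auto simp: T'_def T_def content_def split: if_splits)
  then have "finite (content T')" by (rule finite_subset) simp
  then have "content T' \<noteq> L" using inf by auto
  with sub nc show False by blast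
qed

lemma dep_G: "initseg T n = initseg T' n \<Longrightarrow> G h T n = G h T' n"
  by (simp add: G_def)
lemma dep_Sd: "initseg T n = initseg T' n \<Longrightarrow> Sd h T n = Sd h T' n"
  by (simp add: Sd_def)

lemma del_Ex: "Ex \<phi> p T \<Longrightarrow> \<exists>n. W \<phi> (p n) = content T"
  unfolding Ex_def by blast
lemma del_Bc: "Bc \<phi> p T \<Longrightarrow> \<exists>n. W \<phi> (p n) = content T"
  unfolding Bc_def by blast

theorem theorem3:
  fixes \<phi> :: "nat \<Rightarrow> nat \<Rightarrow> nat option" and \<L> :: "nat set set"
  assumes "acceptable \<phi>"
  shows "((\<forall>L\<in>\<L>. finite L) \<longleftrightarrow> tau_class \<phi> CautTar Sd Ex \<L>) \<and>
         ((\<forall>L\<in>\<L>. finite L) \<longleftrightarrow> tau_class \<phi> CautTar G Bc \<L>)"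
proof -
  obtain t1 where t1c: "computable1 (\<lambda>x. Some (t1 x))" and t1: "\<forall>e. \<phi> (t1 e) = psiSD e"
    using assms computable_psiSD unfolding acceptable_def by blast
  obtain t2 where t2c: "computable1 (\<lambda>x. Some (t2 x))" and t2: "\<forall>e. \<phi> (t2 e) = psiG e"
    using assms computable_psiG unfolding acceptable_def by blast
  have WSd: "W \<phi> (the (Sd (\<lambda>x. Some (t1 x)) T i)) = CL T i" for T i
    using W_psiSD[of \<phi> t1, OF t1] CL_finite by (simp add: Sd_def set_code_def)
  have WG: "W \<phi> (the (G (\<lambda>x. Some (t2 x)) T i)) = CL T i" for T i
    using W_psiG[of \<phi> t2, OF t2] by (simp add: G_def seq_code_content)
  have caut: "\<not> content T \<subset> CL T i" for T i using CL_sub[of T i] by blast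
  have A: "tau_class \<phi> CautTar Sd Ex \<L>" if fin: "\<forall>L\<in>\<L>. finite L"
    unfolding tau_class_def
  proof (intro exI conjI ballI)
    show "computable1 (\<lambda>x. Some (t1 x))" by (rule t1c)
    fix L assume "L \<in> \<L>"
    then have fL: "finite L" using fin by blast
    show "tau_learns \<phi> CautTar Sd Ex (\<lambda>x. Some (t1 x)) L"
      unfolding tau_learns_def
    proof (intro conjI allI impI)
      fix T i
      show "Sd (\<lambda>x. Some (t1 x)) T i \<noteq> None" by (simp add: Sd_def)
    next
      fix T
      show "CautTar \<phi> (\<lambda>i. the (Sd (\<lambda>x. Some (t1 x)) T i)) T"
        unfolding CautTar_def WSd using caut by blast
    next
      fix T assume "content T = L"
      then obtain n0 where n0: "\<forall>n\<ge>n0. CL T n = content T" using CL_conv fL by blast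
      show "Ex \<phi> (\<lambda>i. the (Sd (\<lambda>x. Some (t1 x)) T i)) T"
        unfolding Ex_def
      proof (intro exI allI impI conjI)
        fix n assume "n0 \<le> n"
        then show "the (Sd (\<lambda>x. Some (t1 x)) T n) = the (Sd (\<lambda>x. Some (t1 x)) T n0)"
          using n0 by (simp add: Sd_def)
        show "W \<phi> (the (Sd (\<lambda>x. Some (t1 x)) T n0)) = content T" using n0 WSd by simp
      qed
    qed
  qed
  have B: "tau_class \<phi> CautTar G Bc \<L>" if fin: "\<forall>L\<in>\<L>. finite L"
    unfolding tau_class_def
  proof (intro exI conjI ballI)
    show "computable1 (\<lambda>x. Some (t2 x))" by (rule t2c)
    fix L assume "L \<in> \<L>"
    then have fL: "finite L" using fin by blast
    show "tau_learns \<phi> CautTar G Bc (\<lambda>x. Some (t2 x)) L"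
      unfolding tau_learns_def
    proof (intro conjI allI impI)
      fix T i
      show "G (\<lambda>x. Some (t2 x)) T i \<noteq> None" by (simp add: G_def)
    next
      fix T
      show "CautTar \<phi> (\<lambda>i. the (G (\<lambda>x. Some (t2 x)) T i)) T"
        unfolding CautTar_def WG using caut by blast
    next
      fix T assume "content T = L"
      then obtain n0 where n0: "\<forall>n\<ge>n0. CL T n = content T" using CL_conv fL by blast
      show "Bc \<phi> (\<lambda>i. the (G (\<lambda>x. Some (t2 x)) T i)) T"
        unfolding Bc_def WG using n0 by blast
    qed
  qed
  have C: "\<forall>L\<in>\<L>. finite L" if "tau_class \<phi> CautTar Sd Ex \<L>"
  proof
    fix L assume "L \<in> \<L>"
    from that obtain h where "\<forall>L\<in>\<L>. tau_learns \<phi> CautTar Sd Ex h L" unfolding tau_class_def by blast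
    then have "tau_learns \<phi> CautTar Sd Ex h L" using \<open>L \<in> \<L>\<close> by blast
    then show "finite L" using infinite_not_learn[of Sd h \<phi> Defs.Ex L] dep_Sd del_Ex by blast
  qed
  have D: "\<forall>L\<in>\<L>. finite L" if "tau_class \<phi> CautTar G Bc \<L>"
  proof
    fix L assume "L \<in> \<L>"
    from that obtain h where "\<forall>L\<in>\<L>. tau_learns \<phi> CautTar G Bc h L" unfolding tau_class_def by blast
    then have "tau_learns \<phi> CautTar G Bc h L" using \<open>L \<in> \<L>\<close> by blast
    then show "finite L" using infinite_not_learn[of G h \<phi> Bc L] dep_G del_Bc by blast
  qed
  show ?thesis using A B C D by blast
qed


end
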